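(* Let $G$ be a graph with maximum degree $\Delta\ge 1$ such that for every $i\in\{1,\ldots,\Delta\}$ there is a vertex of $G$ of degree $i$. Then $wr(G)\ge \log_3 \Delta$.
   Context: All graphs are finite, simple and undirected. For a set $E'$ of edges of a graph, the subgraph induced by $E'$ is the graph whose edge set is $E'$ and whose vertex set is the set of endpoints of edges in $E'$. A graph is weakly semiregular if there are two numbers $a,b$ (not necessarily distinct) such that the degree of every vertex is $a$ or $b$. The weakly semiregular number $wr(G)$ of a graph $G$ is the minimum number of subsets into which $E(G)$ can be partitioned so that the subgraph induced by each subset is weakly semiregular. *)

theory Defs
  imports Complex_Main
begin

definition simple_graph :: "'a set \<Rightarrow> 'a set set \<Rightarrow> bool" where
  "simple_graph V E \<longleftrightarrow> finite V \<and> (\<forall>e\<in>E. e \<subseteq> V \<and> card e = 2)"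

definition degree :: "'a set set \<Rightarrow> 'a \<Rightarrow> nat" where
  "degree E v = card {e\<in>E. v \<in> e}"

definition max_degree :: "'a set \<Rightarrow> 'a set set \<Rightarrow> nat" where
  "max_degree V E = Max (insert 0 (degree E ` V))"

text \<open>The subgraph induced by the edge set F has vertex set \<Union>F (the endpoints).
  It is weakly semiregular if all its vertex degrees lie in {a,b} for some a, b.\<close>
definition weakly_semiregular_edges :: "'a set set \<Rightarrow> bool" where
  "weakly_semiregular_edges F \<longleftrightarrow> (\<exists>a b. \<forall>v\<in>\<Union>F. degree F v = a \<or> degree F v = b)"

definition wr_partition :: "'a set set \<Rightarrow> nat \<Rightarrow> bool" where
  "wr_partition E k \<longleftrightarrow> (\<exists>c. (\<forall>e\<in>E. c e < k) \<and>
      (\<forall>i<k. weakly_semiregular_edges {e\<in>E. c e = i}))"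

definition wr :: "'a set set \<Rightarrow> nat" where
  "wr E = (LEAST k. wr_partition E k)"

end

theory Submission
  imports Defs "HOL-Library.FuncSet"
begin

lemma wr_exists:
  assumes "finite E"
  shows "wr_partition E (card E)"
proof -
  obtain f where f: "bij_betw f E {0..<card E}"
    using assms ex_bij_betw_finite_nat by blast
  have "\<forall>e\<in>E. f e < card E" using f by (auto simp: bij_betw_def)
  moreover have "weakly_semiregular_edges {e\<in>E. f e = i}" if "i < card E" for i
  proof -
    have sub: "{e\<in>E. f e = i} \<subseteq> {e. e \<in> E \<and> f e = i}" by simp
    have "\<forall>v\<in>\<Union>{e\<in>E. f e = i}. degree {e\<in>E. f e = i} v = 1"
    proof
      fix v assume "v \<in> \<Union>{e\<in>E. f e = i}"
      then obtain e where e: "e \<in> E" "f e = i" "v \<in> e" by auto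
      have "{x\<in>{e\<in>E. f e = i}. v \<in> x} = {e}"
        using e f by (auto simp: bij_betw_def inj_on_def)
      then show "degree {e\<in>E. f e = i} v = 1" by (simp add: degree_def)
    qed
    then show ?thesis unfolding weakly_semiregular_edges_def by blast
  qed
  ultimately show ?thesis unfolding wr_partition_def by blast
qed

lemma card_split:
  assumes "finite A" "\<forall>x\<in>A. c x < (k::nat)"
  shows "card A = (\<Sum>i<k. card {x\<in>A. c x = i})"
proof -
  have "A = (\<Union>i\<in>{..<k}. {x\<in>A. c x = i})" using assms by auto
  then have "card A = card (\<Union>i\<in>{..<k}. {x\<in>A. c x = i})" by simp
  also have "\<dots> = (\<Sum>i<k. card {x\<in>A. c x = i})"
    by (rule card_UN_disjoint) (use assms in auto)
  finally show ?thesis .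
qed

lemma degrees_bound:
  assumes "finite V" "finite E" "wr_partition E k"
  shows "card (degree E ` V) \<le> 3 ^ k"
proof -
  from assms(3) obtain c where c: "\<forall>e\<in>E. c e < k"
    and ws: "\<forall>i<k. weakly_semiregular_edges {e\<in>E. c e = i}"
    unfolding wr_partition_def by blast
  define F where "F i = {e\<in>E. c e = i}" for i
  have "\<forall>i<k. \<exists>a b. \<forall>v\<in>\<Union>(F i). degree (F i) v = a \<or> degree (F i) v = b"
    using ws unfolding weakly_semiregular_edges_def F_def by blast
  then obtain a b where ab: "\<And>i v. i < k \<Longrightarrow> v \<in> \<Union>(F i) \<Longrightarrow> degree (F i) v = a i \<or> degree (F i) v = b i"
    by metis
  define g where "g v = (\<lambda>i. if i < k then (if v \<notin> \<Union>(F i) then 0 else if degree (F i) v = a i then 1 else (2::nat)) else undefined)" for v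
  define h where "h i t = (if t = 0 then 0 else if t = (1::nat) then a i else b i)" for i t
  define \<Psi> where "\<Psi> f = (\<Sum>i<k. h i (f i))" for f
  have dF: "degree (F i) v = h i (g v i)" if "i < k" for i v
  proof (cases "v \<in> \<Union>(F i)")
    case True then show ?thesis using ab[OF that True] that by (auto simp: g_def h_def)
  next
    case False
    then have "{e\<in>F i. v \<in> e} = {}" by auto
    then have "degree (F i) v = 0" unfolding degree_def by (metis card.empty)
    then show ?thesis using False that by (simp add: g_def h_def)
  qed
  have dE: "degree E v = \<Psi> (g v)" for v
  proof -
    have "degree E v = (\<Sum>i<k. card {x\<in>{e\<in>E. v \<in> e}. c x = i})"
      unfolding degree_def by (rule card_split) (use assms(2) c in auto)
    also have "\<dots> = (\<Sum>i<k. degree (F i) v)"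
      by (rule sum.cong) (auto simp: degree_def F_def intro!: arg_cong[where f=card])
    also have "\<dots> = \<Psi> (g v)" unfolding \<Psi>_def using dF by simp
    finally show ?thesis .
  qed
  have gP: "g ` V \<subseteq> PiE {..<k} (\<lambda>_. {0,1,2})"
  proof
    fix f assume "f \<in> g ` V"
    then obtain v where "f = g v" by blast
    then show "f \<in> PiE {..<k} (\<lambda>_. {0,1,2})"
      unfolding PiE_iff extensional_def by (simp add: g_def)
  qed
  have "degree E ` V = \<Psi> ` (g ` V)" using dE by (auto simp: image_image)
  also have "card \<dots> \<le> card (g ` V)" using assms(1) by (simp add: card_image_le)
  also have "\<dots> \<le> card (PiE {..<k} (\<lambda>_. {0,1,2::nat}))"
    by (rule card_mono[OF _ gP]) (simp add: finite_PiE)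
  also have "\<dots> = 3 ^ k" by (simp add: card_PiE numeral_3_eq_3)
  finally show ?thesis .
qed

theorem mainTheorem4:
  fixes V :: "'a set" and E :: "'a set set"
  assumes "simple_graph V E"
    and "max_degree V E \<ge> 1"
    and "\<forall>i\<in>{1..max_degree V E}. \<exists>v\<in>V. degree E v = i"
  shows "real (wr E) \<ge> log 3 (real (max_degree V E))"
proof -
  let ?D = "max_degree V E"
  have fV: "finite V" using assms(1) by (simp add: simple_graph_def)
  have "E \<subseteq> Pow V" using assms(1) by (auto simp: simple_graph_def)
  then have fE: "finite E" using fV by (meson finite_Pow_iff finite_subset)
  have wp: "wr_partition E (wr E)"
    unfolding wr_def by (rule LeastI[where P="wr_partition E", OF wr_exists[OF fE]])
  have "{1..?D} \<subseteq> degree E ` V"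
  proof
    fix i assume "i \<in> {1..?D}"
    then obtain v where "v \<in> V" "degree E v = i" using assms(3) by blast
    then show "i \<in> degree E ` V" by (metis image_eqI)
  qed
  then have "card {1..?D} \<le> card (degree E ` V)"
    by (rule card_mono[rotated]) (use fV in simp)
  also have "\<dots> \<le> 3 ^ wr E" by (rule degrees_bound[OF fV fE wp])
  finally have le: "?D \<le> 3 ^ wr E" by simp
  then have "real ?D \<le> 3 powr real (wr E)"
    by (metis of_nat_le_iff of_nat_numeral of_nat_power powr_realpow zero_less_numeral)
  then have "log 3 (real ?D) \<le> log 3 (3 powr real (wr E))"
    using assms(2) by (subst log_le_cancel_iff) auto
  then show ?thesis by simp
qed

end
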